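(* Let $A=(A_{ij})$ be a real symmetric $n\times n$ matrix with eigenvalues $\lambda_1(A),\dots,\lambda_n(A)$, and let $$\mu=\frac1n\sum_{i=1}^n\lambda_i(A),\qquad \sigma^2=\frac1n\sum_{i=1}^n(\lambda_i(A)-\mu)^2,$$ with $\sigma>0$. If for some integer $k$ with $1\le k<n/2$ $$\frac1n\sum_{i\neq j}A_{ij}\ge\sigma\sqrt{\frac{(n-k)^2+k^2}{n}},$$ then the largest (rightmost) eigenvalue of $A$ is simple, and a corresponding eigenvector can be chosen (up to sign) so that it has at least $n-k+1$ nonnegative entries. *)

theory Defs
  imports "Jordan_Normal_Form.Char_Poly"
begin

definition eigenvalue_list :: "real mat \<Rightarrow> real list \<Rightarrow> bool" where
  "eigenvalue_list A ls \<longleftrightarrow> length ls = dim_row A \<and> char_poly A = (\<Prod>a\<leftarrow>ls. [:- a, 1:])"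

end

theory Submission imports Defs "Jordan_Normal_Form.Schur_Decomposition" begin

lemma conj_real_vec[simp]: "conjugate (v::real vec) = v"
  by (rule eq_vecI) auto

lemma self_sprod_pos: assumes "(v::real vec) \<in> carrier_vec n" "v \<noteq> 0\<^sub>v n"
  shows "v \<bullet> v > 0"
proof -
  have "v \<bullet>c v \<ge> 0" by blast
  moreover have "v \<bullet>c v \<noteq> 0" using assms conjugate_square_eq_0_vec[OF assms(1)] by simp
  ultimately show ?thesis by simp
qed

lemma normalize_unit: assumes v: "(v::real vec) \<in> carrier_vec n" "v \<noteq> 0\<^sub>v n"
  shows "((1 / sqrt (v \<bullet> v)) \<cdot>\<^sub>v v) \<bullet> ((1 / sqrt (v \<bullet> v)) \<cdot>\<^sub>v v) = 1"
proof -
  have q: "v \<bullet> v > 0" using self_sprod_pos[OF v] .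
  have "((1 / sqrt (v \<bullet> v)) \<cdot>\<^sub>v v) \<bullet> ((1 / sqrt (v \<bullet> v)) \<cdot>\<^sub>v v)
      = (1 / sqrt (v \<bullet> v)) * ((1 / sqrt (v \<bullet> v)) * (v \<bullet> v))"
    using v by (simp add: smult_scalar_prod_distrib scalar_prod_smult_distrib)
  also have "\<dots> = 1" using q by (simp add: field_simps)
  finally show ?thesis .
qed

lemma spectral:
  fixes A :: "real mat"
  assumes "A \<in> carrier_mat n n" "transpose_mat A = A" "char_poly A = (\<Prod>e\<leftarrow>es. [:-e,1:])"
  shows "\<exists>P \<in> carrier_mat n n. transpose_mat P * P = 1\<^sub>m n \<and>
     A * P = P * mat n n (\<lambda>(i,j). if i = j then es ! i else 0)"
  using assms
proof (induct es arbitrary: n A)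
  case Nil
  then have "n = 0" using degree_monic_char_poly[of A n] by auto
  then show ?case using Nil(1) by (intro bexI[of _ "1\<^sub>m 0"]) (auto intro!: eq_matI)
next
  case (Cons e es n A)
  from Cons have A: "A \<in> carrier_mat n n" and symm: "transpose_mat A = A" by auto
  from Cons(4) have cp: "char_poly A = [: -e, 1 :] * (\<Prod>e \<leftarrow> es. [:- e, 1:])" by auto
  have mon: "monic (\<Prod>e\<leftarrow> es. [:- e, 1:])" by (rule monic_prod_list, auto)
  have deg: "degree (char_poly A) = Suc (degree (\<Prod>e\<leftarrow> es. [:- e, 1:]))" unfolding cp
    by (subst degree_mult_eq, insert mon, auto)
  with degree_monic_char_poly[OF A] have n: "n \<noteq> 0" by auto
  have ev: "eigenvalue A e" unfolding eigenvalue_root_char_poly[OF A] cp by simp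
  define v0 where "v0 = find_eigenvector A e"
  from find_eigenvector[OF A ev] have "eigenvector A v0 e" unfolding v0_def .
  hence v0: "v0 \<in> carrier_vec n" "v0 \<noteq> 0\<^sub>v n" "A *\<^sub>v v0 = e \<cdot>\<^sub>v v0"
    unfolding eigenvector_def using A by auto
  define v where "v = (1 / sqrt (v0 \<bullet> v0)) \<cdot>\<^sub>v v0"
  have vc: "v \<in> carrier_vec n" unfolding v_def using v0 by auto
  have vv: "v \<bullet> v = 1" unfolding v_def by (rule normalize_unit[OF v0(1,2)])
  have v_nz: "v \<noteq> 0\<^sub>v n" using vv vc by auto
  have Av: "A *\<^sub>v v = e \<cdot>\<^sub>v v" unfolding v_def
    using mult_mat_vec[OF A v0(1)] v0(3) by (simp add: smult_smult_assoc mult.commute)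
  interpret cof_vec_space n "TYPE(real)" .
  from basis_completion[OF vc v_nz]
  have dist_b: "distinct (basis_completion v)" 
    and indep: "\<not> lin_dep (set (basis_completion v))" and b: "set (basis_completion v) \<subseteq> carrier_vec n" 
    and hdb: "hd (basis_completion v) = v" and len_b: "length (basis_completion v) = n" by auto
  from hdb len_b n obtain vs where bv: "basis_completion v = v # vs" by (cases "basis_completion v", auto)
  define ws0 where "ws0 = gram_schmidt n (basis_completion v)"
  from gram_schmidt_result[OF b dist_b indep ws0_def]
  have ws0: "set ws0 \<subseteq> carrier_vec n" "corthogonal ws0" "length ws0 = n" 
    by (auto simp: len_b)
  have hdws0: "hd ws0 = v" unfolding ws0_def bv using gram_schmidt_hd[OF vc] by simp
  have ws00: "ws0 ! 0 = v" using hdws0 n ws0(3) by (cases ws0, auto)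
  define ws where "ws = map (\<lambda>w. (1 / sqrt (w \<bullet> w)) \<cdot>\<^sub>v w) ws0"
  have lenws: "length ws = n" unfolding ws_def using ws0 by simp
  have wsc: "\<And>i. i < n \<Longrightarrow> ws ! i \<in> carrier_vec n" unfolding ws_def using ws0 by auto
  have ws0nz: "\<And>i. i < n \<Longrightarrow> ws0 ! i \<noteq> 0\<^sub>v n"
  proof
    fix i assume i: "i < n" and z: "ws0 ! i = 0\<^sub>v n"
    from corthogonalD[OF ws0(2), of i i] i ws0(3) have "ws0 ! i \<bullet>c ws0 ! i \<noteq> 0" by auto
    with z show False by simp
  qed
  have wsij: "\<And>i j. i < n \<Longrightarrow> j < n \<Longrightarrow> ws ! i \<bullet> ws ! j = (if i = j then 1 else 0)"
  proof -
    fix i j assume i: "i < n" and j: "j < n"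
    have ci: "ws0 ! i \<in> carrier_vec n" and cj: "ws0 ! j \<in> carrier_vec n" using ws0 i j by auto
    show "ws ! i \<bullet> ws ! j = (if i = j then 1 else 0)"
    proof (cases "i = j")
      case True
      then show ?thesis unfolding ws_def using i ws0(3) normalize_unit[OF ci ws0nz[OF i]] by simp
    next
      case False
      from corthogonalD[OF ws0(2), of i j] i j ws0(3) False have "ws0 ! i \<bullet> ws0 ! j = 0" by auto
      then show ?thesis unfolding ws_def using i j ws0(3) ci cj False
        by (simp add: smult_scalar_prod_distrib scalar_prod_smult_distrib)
    qed
  qed
  have ws_0: "ws ! 0 = v" unfolding ws_def using n ws0(3) ws00 vv by simp
  define W where "W = mat_of_cols n ws"
  have W: "W \<in> carrier_mat n n" unfolding W_def using lenws by auto
  have colW: "\<And>i. i < n \<Longrightarrow> col W i = ws ! i" unfolding W_def using lenws wsc by auto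
  have WtW: "transpose_mat W * W = 1\<^sub>m n"
    by (rule eq_matI, insert W colW wsij, auto)
  have WWt: "W * transpose_mat W = 1\<^sub>m n"
    using mat_mult_left_right_inverse[OF _ W WtW] W by auto
  define A' where "A' = transpose_mat W * A * W"
  have A': "A' \<in> carrier_mat n n" unfolding A'_def using W A by auto
  have A'sym: "transpose_mat A' = A'" unfolding A'_def
    using W A symm by (simp add: transpose_mult[of _ n n _ n])
  have A'assoc: "A' = transpose_mat W * (A * W)" unfolding A'_def using W A by simp
  have A'col: "\<And>i. i < n \<Longrightarrow> A' $$ (i, 0) = (if i = 0 then e else 0)"
  proof -
    fix i assume i: "i < n"
    have "A' $$ (i, 0) = row (transpose_mat W) i \<bullet> col (A * W) 0"
      unfolding A'assoc using W A i n by (subst index_mult_mat) auto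
    also have "row (transpose_mat W) i = ws ! i" using W i colW by simp
    also have "col (A * W) 0 = A *\<^sub>v col W 0" using col_mult2[OF A W, of 0] n by simp
    also have "col W 0 = v" using colW[of 0] ws_0 n by simp
    also have "ws ! i \<bullet> (A *\<^sub>v v) = e * (ws ! i \<bullet> v)" unfolding Av using wsc[OF i] vc by simp
    also have "\<dots> = (if i = 0 then e else 0)" using wsij[OF i, of 0] n ws_0 by auto
    finally show "A' $$ (i, 0) = (if i = 0 then e else 0)" .
  qed
  have A'row: "\<And>j. j < n \<Longrightarrow> A' $$ (0, j) = (if j = 0 then e else 0)"
  proof -
    fix j assume j: "j < n"
    have "A' $$ (0, j) = transpose_mat A' $$ (0, j)" using A'sym by simp
    also have "\<dots> = A' $$ (j, 0)" using A' j n by simp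
    finally show "A' $$ (0, j) = (if j = 0 then e else 0)" using A'col[OF j] by simp
  qed
  obtain A1 A2 A0 A3 where splitA': "split_block A' 1 1 = (A1,A2,A0,A3)"
    by (cases "split_block A' 1 1", auto)
  from A' n have "dim_row A' = 1 + (n-1)" "dim_col A' = 1 + (n-1)" by auto
  from split_block[OF splitA' this] have A1: "A1 \<in> carrier_mat 1 1" and A2: "A2 \<in> carrier_mat 1 (n-1)"
    and A0: "A0 \<in> carrier_mat (n-1) 1" and A3: "A3 \<in> carrier_mat (n-1) (n-1)" 
    and A'block: "A' = four_block_mat A1 A2 A0 A3" by auto
  have A'idx: "\<And>i j. i < n \<Longrightarrow> j < n \<Longrightarrow> A' $$ (i,j) = (if i < 1 then
      if j < 1 then A1 $$ (i,j) else A2 $$ (i,j - 1)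
      else if j < 1 then A0 $$ (i - 1, j) else A3 $$ (i - 1, j - 1))"
    unfolding A'block using A1 A3 n by (subst index_mat_four_block) auto
  have A1id: "A1 = mat 1 1 (\<lambda> _. e)"
    by (rule eq_matI, insert A1 A'idx[of 0 0] A'col[of 0] n, auto)
  have A2id: "A2 = 0\<^sub>m 1 (n-1)"
  proof (rule eq_matI)
    fix i j assume "i < dim_row (0\<^sub>m 1 (n-1))" "j < dim_col (0\<^sub>m 1 (n - 1))"
    then have i: "i = 0" and j: "j < n - 1" by auto
    show "A2 $$ (i, j) = 0\<^sub>m 1 (n - 1) $$ (i, j)"
      using A'idx[of 0 "Suc j"] A'row[of "Suc j"] i j by auto
  qed (insert A2, auto)
  have A0id: "A0 = 0\<^sub>m (n-1) 1"
  proof (rule eq_matI)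
    fix i j assume "i < dim_row (0\<^sub>m (n-1) 1)" "j < dim_col (0\<^sub>m (n - 1) 1)"
    then have i: "i < n - 1" and j: "j = 0" by auto
    show "A0 $$ (i, j) = 0\<^sub>m (n-1) 1 $$ (i, j)"
      using A'idx[of "Suc i" 0] A'col[of "Suc i"] i j by auto
  qed (insert A0, auto)
  have A3sym: "transpose_mat A3 = A3"
  proof (rule eq_matI)
    fix i j assume "i < dim_row A3" "j < dim_col A3"
    then have i: "i < n - 1" and j: "j < n - 1" using A3 by auto
    have "A3 $$ (j, i) = A' $$ (Suc j, Suc i)" using A'idx[of "Suc j" "Suc i"] i j by auto
    also have "\<dots> = transpose_mat A' $$ (Suc j, Suc i)" using A'sym by simp
    also have "\<dots> = A' $$ (Suc i, Suc j)" using A' i j by simp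
    also have "\<dots> = A3 $$ (i, j)" using A'idx[of "Suc i" "Suc j"] i j by auto
    finally show "transpose_mat A3 $$ (i, j) = A3 $$ (i, j)" using i j A3 by simp
  qed (insert A3, auto)
  have simA: "similar_mat A' A"
    unfolding similar_mat_def
    by (rule exI[of _ "transpose_mat W"], rule exI[of _ W], rule similar_mat_witI[of _ _ n],
        insert WtW WWt A W A', auto simp: A'_def)
  have "char_poly A' = [: -e,1 :] * (\<Prod> e \<leftarrow> es. [:- e, 1:])" using cp char_poly_similar[OF simA] by simp
  also have "char_poly A' = char_poly A1 * char_poly A3" 
    unfolding A'block A0id by (rule char_poly_four_block_zeros_col[OF A1 A2 A3])
  also have "char_poly A1 = [: -e,1 :]"
    by (simp add: A1id char_poly_defs det_def sign_def)
  finally have cp3: "char_poly A3 = (\<Prod> e \<leftarrow> es. [:- e, 1:])"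
    by (metis mult_cancel_left pCons_eq_0_iff zero_neq_one)
  from Cons(1)[OF A3 A3sym cp3] obtain P3 where P3: "P3 \<in> carrier_mat (n-1) (n-1)"
    and P3o: "transpose_mat P3 * P3 = 1\<^sub>m (n-1)"
    and AP3: "A3 * P3 = P3 * mat (n-1) (n-1) (\<lambda>(i,j). if i = j then es ! i else 0)" by blast
  define D3 where "D3 = mat (n-1) (n-1) (\<lambda>(i,j). if i = j then es ! i else 0)"
  have D3: "D3 \<in> carrier_mat (n-1) (n-1)" unfolding D3_def by simp
  have n1: "1 + (n - 1) = n" using n by simp
  define Q where "Q = four_block_mat (1\<^sub>m 1) (0\<^sub>m 1 (n-1)) (0\<^sub>m (n-1) 1) P3"
  have Q: "Q \<in> carrier_mat n n" unfolding Q_def using P3 four_block_carrier_mat[of "1\<^sub>m 1" 1 1 P3 "n-1" "n-1"] n1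
    by simp
  have QtQ: "transpose_mat Q * Q = 1\<^sub>m n"
  proof -
    have "transpose_mat Q = four_block_mat (1\<^sub>m 1) (0\<^sub>m 1 (n-1)) (0\<^sub>m (n-1) 1) (transpose_mat P3)"
      unfolding Q_def using P3 by (subst transpose_four_block_mat[of _ 1 1 _ "n-1" _ "n-1"]) auto
    also have "\<dots> * Q = four_block_mat (1\<^sub>m 1) (0\<^sub>m 1 (n-1)) (0\<^sub>m (n-1) 1) (1\<^sub>m (n-1))"
      unfolding Q_def using P3 P3o by (subst mult_four_block_mat[of _ 1 1 _ "n-1" _ "n-1" _ _ 1 _ "n-1"]) auto
    also have "\<dots> = 1\<^sub>m n" using n1 by (intro eq_matI) auto
    finally show ?thesis .
  qed
  define E where "E = four_block_mat A1 (0\<^sub>m 1 (n-1)) (0\<^sub>m (n-1) 1) D3"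
  have A'Q: "A' * Q = Q * E"
  proof -
    have "A' * Q = four_block_mat A1 (0\<^sub>m 1 (n-1)) (0\<^sub>m (n-1) 1) (A3 * P3)"
      unfolding A'block Q_def A2id A0id using P3 A1 A3 
      by (subst mult_four_block_mat[of _ 1 1 _ "n-1" _ "n-1" _ _ 1 _ "n-1"]) auto
    also have "\<dots> = Q * E"
      unfolding Q_def E_def AP3 D3_def[symmetric] using P3 A1 D3 
      by (subst mult_four_block_mat[of _ 1 1 _ "n-1" _ "n-1" _ _ 1 _ "n-1"]) auto
    finally show ?thesis .
  qed
  have Eid: "E = mat n n (\<lambda>(i,j). if i = j then (e # es) ! i else 0)"
    unfolding E_def using A1 D3 n1 by (intro eq_matI) (auto simp: A1id D3_def nth_Cons')
  have AW: "A * W = W * A'"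
  proof -
    have "W * A' = (W * transpose_mat W) * (A * W)" unfolding A'assoc
      by (rule assoc_mult_mat[symmetric, of _ n n _ n _ n]) (use W A in auto)
    also have "\<dots> = A * W" unfolding WWt using A W by simp
    finally show ?thesis by simp
  qed
  show ?case
  proof (intro bexI[of _ "W * Q"] conjI)
    show "W * Q \<in> carrier_mat n n" using W Q by simp
    have "transpose_mat (W * Q) * (W * Q) = transpose_mat Q * (transpose_mat W * (W * Q))"
      using W Q by (simp add: transpose_mult[of _ n n _ n] assoc_mult_mat[of _ n n _ n _ n])
    also have "transpose_mat W * (W * Q) = (transpose_mat W * W) * Q"
      by (rule assoc_mult_mat[symmetric, of _ n n _ n _ n]) (use W Q in auto)
    also have "transpose_mat Q * \<dots> = 1\<^sub>m n" unfolding WtW using Q QtQ by simp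
    finally show "transpose_mat (W * Q) * (W * Q) = 1\<^sub>m n" .
    have E: "E \<in> carrier_mat n n" unfolding Eid by simp
    have "A * (W * Q) = (A * W) * Q" using A W Q by simp
    also have "\<dots> = W * (A' * Q)" unfolding AW using W A' Q by simp
    also have "\<dots> = (W * Q) * E" unfolding A'Q using W Q E by simp
    finally show "A * (W * Q) = W * Q * mat n n (\<lambda>(i, j). if i = j then (e # es) ! i else 0)"
      unfolding Eid .
  qed
qed

lemma cs_sum:
  fixes a b :: "nat \<Rightarrow> real" assumes I: "finite I"
  shows "(\<Sum>i\<in>I. a i * b i)\<^sup>2 \<le> (\<Sum>i\<in>I. (a i)\<^sup>2) * (\<Sum>i\<in>I. (b i)\<^sup>2)"
proof -
  have "0 \<le> (\<Sum>i\<in>I. \<Sum>j\<in>I. (a i * b j - a j * b i)\<^sup>2)" by (intro sum_nonneg) auto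
  also have "(\<Sum>i\<in>I. \<Sum>j\<in>I. (a i * b j - a j * b i)\<^sup>2)
     = (\<Sum>i\<in>I. \<Sum>j\<in>I. (a i)\<^sup>2 * (b j)\<^sup>2) + (\<Sum>i\<in>I. \<Sum>j\<in>I. (a j)\<^sup>2 * (b i)\<^sup>2)
       - 2 * (\<Sum>i\<in>I. \<Sum>j\<in>I. (a i * b i) * (a j * b j))"
  proof -
    have e: "\<And>i j. (a i * b j - a j * b i)\<^sup>2 = (a i)\<^sup>2 * (b j)\<^sup>2 + (a j)\<^sup>2 * (b i)\<^sup>2 - 2 * ((a i * b i) * (a j * b j))"
      by (simp add: power2_eq_square algebra_simps)
    show ?thesis unfolding e sum_subtractf sum.distrib sum_distrib_left[symmetric] by simp
  qed
  also have "\<dots> = 2 * ((\<Sum>i\<in>I. (a i)\<^sup>2) * (\<Sum>i\<in>I. (b i)\<^sup>2)) - 2 * (\<Sum>i\<in>I. a i * b i)\<^sup>2"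
  proof -
    have 1: "(\<Sum>i\<in>I. \<Sum>j\<in>I. (a i)\<^sup>2 * (b j)\<^sup>2) = (\<Sum>i\<in>I. (a i)\<^sup>2) * (\<Sum>i\<in>I. (b i)\<^sup>2)"
      by (simp add: sum_product)
    have 2: "(\<Sum>i\<in>I. \<Sum>j\<in>I. (a j)\<^sup>2 * (b i)\<^sup>2) = (\<Sum>i\<in>I. (b i)\<^sup>2) * (\<Sum>i\<in>I. (a i)\<^sup>2)"
      unfolding sum_product by (rule sum.cong[OF refl], rule sum.cong[OF refl], simp)
    have 3: "(\<Sum>i\<in>I. \<Sum>j\<in>I. (a i * b i) * (a j * b j)) = (\<Sum>i\<in>I. a i * b i)\<^sup>2"
      by (simp only: power2_eq_square sum_product)
    show ?thesis unfolding 1 2 3 by (simp add: mult.commute)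
  qed
  finally show ?thesis by simp
qed

lemma sumsq_le_sq:
  fixes w :: "nat \<Rightarrow> real" assumes I: "finite I" and nn: "\<And>i. i \<in> I \<Longrightarrow> w i \<ge> 0"
  shows "(\<Sum>i\<in>I. (w i)\<^sup>2) \<le> (\<Sum>i\<in>I. w i)\<^sup>2"
proof -
  have "(\<Sum>i\<in>I. (w i)\<^sup>2) \<le> (\<Sum>i\<in>I. w i * (\<Sum>j\<in>I. w j))"
  proof (rule sum_mono)
    fix i assume i: "i \<in> I"
    have "w i \<le> (\<Sum>j\<in>I. w j)" using member_le_sum[of i I w] nn i I by auto
    then show "(w i)\<^sup>2 \<le> w i * (\<Sum>j\<in>I. w j)" using nn[OF i] by (simp add: power2_eq_square mult_left_mono)
  qed
  also have "\<dots> = (\<Sum>i\<in>I. w i)\<^sup>2" by (simp add: power2_eq_square sum_distrib_right)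
  finally show ?thesis .
qed

lemma key_ineq:
  fixes w \<beta> :: "nat \<Rightarrow> real" and n p :: nat and s :: real
  assumes p: "p < n" and wnn: "\<And>i. i < n \<Longrightarrow> w i \<ge> 0" and wsum: "(\<Sum>i<n. w i) = 1"
    and bsum: "(\<Sum>i<n. \<beta> i) = 0" and bmax: "\<And>i. i < n \<Longrightarrow> \<beta> i \<le> \<beta> p"
    and ws: "w p \<le> s" and s1: "s < 1"
  shows "(\<Sum>i<n. w i * \<beta> i) \<le> sqrt (\<Sum>i<n. (\<beta> i)\<^sup>2) * sqrt (s\<^sup>2 + (1-s)\<^sup>2 - 1/n)"
proof -
  define t where "t = w p"
  have t1: "t < 1" "t \<le> s" using ws s1 t_def by auto
  define l where "l = (1 - s) / (1 - t)"
  have l0: "0 \<le> l" "l \<le> 1" using t1 s1 unfolding l_def by (auto simp: field_simps)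
  have l1t: "l * (1 - t) = 1 - s" using t1 unfolding l_def by simp
  define w' where "w' i = (if i = p then s else l * w i)" for i
  let ?R = "{..<n} - {p}"
  have fin: "finite ?R" by simp
  have split: "\<And>f :: nat \<Rightarrow> real. (\<Sum>i<n. f i) = f p + (\<Sum>i\<in>?R. f i)"
    using p by (simp add: sum.remove)
  have rest_w: "(\<Sum>i\<in>?R. w i) = 1 - t" using wsum split[of w] t_def by simp
  have w'sum: "(\<Sum>i<n. w' i) = 1"
  proof -
    have "(\<Sum>i<n. w' i) = s + (\<Sum>i\<in>?R. l * w i)" using split[of w'] by (simp add: w'_def)
    also have "\<dots> = s + l * (1 - t)" by (simp add: sum_distrib_left[symmetric] rest_w)
    finally show ?thesis using l1t by simp
  qed
  define R where "R = (\<Sum>i\<in>?R. w i * \<beta> i)"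
  have R: "R \<le> (1 - t) * \<beta> p"
  proof -
    have "R \<le> (\<Sum>i\<in>?R. w i * \<beta> p)" unfolding R_def
      by (rule sum_mono) (use wnn bmax in \<open>auto intro: mult_left_mono\<close>)
    also have "\<dots> = (1 - t) * \<beta> p" by (simp add: sum_distrib_right[symmetric] rest_w)
    finally show ?thesis .
  qed
  have gain: "(\<Sum>i<n. w i * \<beta> i) \<le> (\<Sum>i<n. w' i * \<beta> i)"
  proof -
    have e1: "(\<Sum>i<n. w i * \<beta> i) = t * \<beta> p + R" using split[of "\<lambda>i. w i * \<beta> i"] t_def R_def by simp
    have e2: "(\<Sum>i<n. w' i * \<beta> i) = s * \<beta> p + l * R" using split[of "\<lambda>i. w' i * \<beta> i"] R_def
      by (simp add: w'_def sum_distrib_left mult.assoc)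
    have "(1 - l) * R \<le> (1 - l) * ((1 - t) * \<beta> p)" using R l0 by (intro mult_left_mono) auto
    also have "(1 - l) * (1 - t) = s - t" using l1t by (simp add: algebra_simps)
    hence "(1 - l) * ((1 - t) * \<beta> p) = (s - t) * \<beta> p" by (simp add: mult.assoc[symmetric])
    finally show ?thesis unfolding e1 e2 by (simp add: algebra_simps)
  qed
  have w'sq: "(\<Sum>i<n. (w' i)\<^sup>2) \<le> s\<^sup>2 + (1-s)\<^sup>2"
  proof -
    have "(\<Sum>i<n. (w' i)\<^sup>2) = s\<^sup>2 + l\<^sup>2 * (\<Sum>i\<in>?R. (w i)\<^sup>2)" using split[of "\<lambda>i. (w' i)\<^sup>2"]
      by (simp add: w'_def sum_distrib_left power_mult_distrib)
    also have "(\<Sum>i\<in>?R. (w i)\<^sup>2) \<le> (\<Sum>i\<in>?R. w i)\<^sup>2" by (rule sumsq_le_sq) (use wnn in auto)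
    hence "l\<^sup>2 * (\<Sum>i\<in>?R. (w i)\<^sup>2) \<le> l\<^sup>2 * (1 - t)\<^sup>2" unfolding rest_w by (intro mult_left_mono) auto
    hence "s\<^sup>2 + l\<^sup>2 * (\<Sum>i\<in>?R. (w i)\<^sup>2) \<le> s\<^sup>2 + (1-s)\<^sup>2" using l1t by (simp add: power_mult_distrib[symmetric])
    finally show ?thesis .
  qed
  have n0: "real n > 0" using p by simp
  define a where "a i = w' i - 1 / real n" for i
  have ea: "(\<Sum>i<n. w' i * \<beta> i) = (\<Sum>i<n. a i * \<beta> i)"
    by (simp add: a_def left_diff_distrib sum_subtractf sum_distrib_left[symmetric] sum_divide_distrib[symmetric] bsum)
  have asq: "(\<Sum>i<n. (a i)\<^sup>2) = (\<Sum>i<n. (w' i)\<^sup>2) - 1 / real n"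
  proof -
    have "(\<Sum>i<n. (a i)\<^sup>2) = (\<Sum>i<n. (w' i)\<^sup>2) - 2 / real n * (\<Sum>i<n. w' i) + real n * (1 / real n)\<^sup>2"
      by (simp add: a_def power2_diff sum_subtractf sum.distrib sum_distrib_left)
    also have "\<dots> = (\<Sum>i<n. (w' i)\<^sup>2) - 1 / real n" using n0 w'sum by (simp add: power2_eq_square field_simps)
    finally show ?thesis .
  qed
  have "(\<Sum>i<n. w i * \<beta> i) \<le> (\<Sum>i<n. a i * \<beta> i)" using gain ea by simp
  also have "\<dots> \<le> sqrt ((\<Sum>i<n. a i * \<beta> i)\<^sup>2)" by simp
  also have "\<dots> \<le> sqrt ((\<Sum>i<n. (a i)\<^sup>2) * (\<Sum>i<n. (\<beta> i)\<^sup>2))"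
    by (rule real_sqrt_le_mono, rule cs_sum) simp
  also have "\<dots> = sqrt (\<Sum>i<n. (\<beta> i)\<^sup>2) * sqrt (\<Sum>i<n. (a i)\<^sup>2)" by (simp add: real_sqrt_mult)
  also have "\<dots> \<le> sqrt (\<Sum>i<n. (\<beta> i)\<^sup>2) * sqrt (s\<^sup>2 + (1-s)\<^sup>2 - 1/n)"
    by (intro mult_left_mono real_sqrt_le_mono) (use asq w'sq in \<open>auto intro: sum_nonneg\<close>)
  finally show ?thesis .
qed

lemma subset_bound:
  fixes f :: "nat \<Rightarrow> real" assumes I: "finite I" and S: "S \<subseteq> I"
  shows "(\<Sum>i\<in>S. f i)\<^sup>2 \<le> real (card S) * (\<Sum>i\<in>I. (f i)\<^sup>2)"
proof -
  have fS: "finite S" using I S finite_subset by auto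
  have "(\<Sum>i\<in>S. f i)\<^sup>2 = (\<Sum>i\<in>S. 1 * f i)\<^sup>2" by simp
  also have "\<dots> \<le> (\<Sum>i\<in>S. 1\<^sup>2) * (\<Sum>i\<in>S. (f i)\<^sup>2)" by (rule cs_sum[OF fS])
  also have "\<dots> = real (card S) * (\<Sum>i\<in>S. (f i)\<^sup>2)" by simp
  also have "\<dots> \<le> real (card S) * (\<Sum>i\<in>I. (f i)\<^sup>2)"
    by (intro mult_left_mono sum_mono2[OF I S]) auto
  finally show ?thesis .
qed

lemma sign_bound:
  fixes f :: "nat \<Rightarrow> real" assumes I: "finite I" and cP: "card {i\<in>I. f i \<ge> 0} \<le> m"
    and cN: "card {i\<in>I. - f i \<ge> 0} \<le> m"
  shows "(\<Sum>i\<in>I. f i)\<^sup>2 \<le> real m * (\<Sum>i\<in>I. (f i)\<^sup>2)"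
proof -
  define P where "P = {i\<in>I. f i \<ge> 0}"
  define N where "N = {i\<in>I. f i < 0}"
  have fP: "finite P" "finite N" using I unfolding P_def N_def by auto
  have IPN: "I = P \<union> N" "P \<inter> N = {}" unfolding P_def N_def by auto
  have sI: "(\<Sum>i\<in>I. f i) = (\<Sum>i\<in>P. f i) + (\<Sum>i\<in>N. f i)"
    unfolding IPN(1) by (rule sum.union_disjoint[OF fP IPN(2)])
  have sP: "(\<Sum>i\<in>P. f i) \<ge> 0" unfolding P_def by (rule sum_nonneg) auto
  have sN: "(\<Sum>i\<in>N. f i) \<le> 0" unfolding N_def by (rule sum_nonpos) auto
  have cN': "card N \<le> m" using cN card_mono[of "{i\<in>I. - f i \<ge> 0}" N] I unfolding N_def by fastforce
  have sq0: "0 \<le> (\<Sum>i\<in>I. (f i)\<^sup>2)" by (rule sum_nonneg) auto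
  show ?thesis
  proof (cases "(\<Sum>i\<in>I. f i) \<ge> 0")
    case True
    have "(\<Sum>i\<in>I. f i)\<^sup>2 \<le> (\<Sum>i\<in>P. f i)\<^sup>2" using True sI sN by (intro power_mono) auto
    also have "\<dots> \<le> real (card P) * (\<Sum>i\<in>I. (f i)\<^sup>2)" by (rule subset_bound[OF I]) (auto simp: P_def)
    also have "\<dots> \<le> real m * (\<Sum>i\<in>I. (f i)\<^sup>2)" using cP sq0 unfolding P_def by (intro mult_right_mono) auto
    finally show ?thesis .
  next
    case False
    have "(\<Sum>i\<in>I. f i)\<^sup>2 = (- (\<Sum>i\<in>I. f i))\<^sup>2" by simp
    also have "\<dots> \<le> (- (\<Sum>i\<in>N. f i))\<^sup>2" using False sI sP by (intro power_mono) auto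
    also have "\<dots> = (\<Sum>i\<in>N. f i)\<^sup>2" by simp
    also have "\<dots> \<le> real (card N) * (\<Sum>i\<in>I. (f i)\<^sup>2)" by (rule subset_bound[OF I]) (auto simp: N_def)
    also have "\<dots> \<le> real m * (\<Sum>i\<in>I. (f i)\<^sup>2)" using cN' sq0 by (intro mult_right_mono) auto
    finally show ?thesis .
  qed
qed


hide_const (open) Coset.order

theorem corollary8:
  fixes A :: "real mat" and n k :: nat and ls :: "real list"
  assumes carr: "A \<in> carrier_mat n n"
    and symm: "transpose_mat A = A"
    and eig: "eigenvalue_list A ls"
    and sig_pos: "sqrt ((1 / real n) * (\<Sum>i<n. (ls ! i - (1 / real n) * (\<Sum>j<n. ls ! j))\<^sup>2)) > 0"
    and k1: "1 \<le> k" and kn: "real k < real n / 2"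
    and hyp: "(1 / real n) * (\<Sum>i<n. \<Sum>j<n. if i \<noteq> j then A $$ (i, j) else 0)
              \<ge> sqrt ((1 / real n) * (\<Sum>i<n. (ls ! i - (1 / real n) * (\<Sum>j<n. ls ! j))\<^sup>2))
                 * sqrt (((real n - real k)\<^sup>2 + (real k)\<^sup>2) / real n)"
  shows "order (Max (set ls)) (char_poly A) = 1
       \<and> (\<exists>v. eigenvector A v (Max (set ls))
              \<and> card {i. i < n \<and> v $ i \<ge> 0} \<ge> n - k + 1)"
proof -
  define M where "M = Max (set ls)"
  from eig carr have len: "length ls = n" and cpA: "char_poly A = (\<Prod>a\<leftarrow>ls. [:- a, 1:])"
    unfolding eigenvalue_list_def by auto
  have kn': "k < n" "2 * k < n" using kn by linarith+
  have n0: "n > 0" using kn' by simp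
  define D where "D = mat n n (\<lambda>(i,j). if i = j then ls ! i else 0)"
  from spectral[OF carr symm cpA] obtain P where P: "P \<in> carrier_mat n n"
    and PtP: "transpose_mat P * P = 1\<^sub>m n" and AP: "A * P = P * D" unfolding D_def by blast
  have PPt: "P * transpose_mat P = 1\<^sub>m n" using mat_mult_left_right_inverse[OF _ P PtP] P by auto
  define pv where "pv i = col P i" for i
  have pvc: "\<And>i. pv i \<in> carrier_vec n" unfolding pv_def using P by auto
  have pvd[simp]: "\<And>i. dim_vec (pv i) = n" unfolding pv_def using P by auto
  have pij: "\<And>i j. i < n \<Longrightarrow> j < n \<Longrightarrow> pv i \<bullet> pv j = (if i = j then 1 else 0)"
  proof -
    fix i j assume i: "i < n" and j: "j < n"
    have "(transpose_mat P * P) $$ (i,j) = pv i \<bullet> pv j" using P i j unfolding pv_def by simp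
    then show "pv i \<bullet> pv j = (if i = j then 1 else 0)" unfolding PtP using i j by simp
  qed
  have Dc: "D \<in> carrier_mat n n" unfolding D_def by simp
  have Apv: "\<And>i. i < n \<Longrightarrow> A *\<^sub>v pv i = ls ! i \<cdot>\<^sub>v pv i"
  proof -
    fix i assume i: "i < n"
    show "A *\<^sub>v pv i = ls ! i \<cdot>\<^sub>v pv i"
    proof (rule eq_vecI)
      fix k assume "k < dim_vec (ls ! i \<cdot>\<^sub>v pv i)"
      then have k: "k < n" using pvc[of i] by simp
      have "(A *\<^sub>v pv i) $ k = (A * P) $$ (k, i)" using carr P k i unfolding pv_def by simp
      also have "\<dots> = (P * D) $$ (k, i)" unfolding AP ..
      also have "\<dots> = (\<Sum>j<n. P $$ (k, j) * (if j = i then ls ! j else 0))"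
        using P Dc k i by (simp add: scalar_prod_def D_def lessThan_atLeast0)
      also have "\<dots> = P $$ (k, i) * ls ! i"
      proof -
        have "(\<Sum>j<n. P $$ (k, j) * (if j = i then ls ! j else 0)) = (\<Sum>j<n. if j = i then P $$ (k, j) * ls ! j else 0)"
          by (rule sum.cong) auto
        also have "\<dots> = P $$ (k, i) * ls ! i" using i by (simp add: sum.delta')
        finally show ?thesis .
      qed
      also have "\<dots> = (ls ! i \<cdot>\<^sub>v pv i) $ k" using P k i unfolding pv_def by simp
      finally show "(A *\<^sub>v pv i) $ k = (ls ! i \<cdot>\<^sub>v pv i) $ k" .
    qed (use pvc carr in auto)
  qed
  have ADP: "A = P * D * transpose_mat P"
  proof -
    have "A = A * (P * transpose_mat P)" unfolding PPt using carr by simp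
    also have "\<dots> = (A * P) * transpose_mat P" using carr P by simp
    finally show ?thesis unfolding AP .
  qed
  have yidx: "\<And>x i. x \<in> carrier_vec n \<Longrightarrow> i < n \<Longrightarrow> (transpose_mat P *\<^sub>v x) $ i = pv i \<bullet> x"
    using P unfolding pv_def by simp
  have quad: "\<And>x. x \<in> carrier_vec n \<Longrightarrow> x \<bullet> (A *\<^sub>v x) = (\<Sum>i<n. (pv i \<bullet> x)\<^sup>2 * ls ! i)"
  proof -
    fix x :: "real vec" assume x: "x \<in> carrier_vec n"
    define y where "y = transpose_mat P *\<^sub>v x"
    have y: "y \<in> carrier_vec n" unfolding y_def using P x by simp
    have "A *\<^sub>v x = P *\<^sub>v (D *\<^sub>v y)" unfolding ADP y_def using P Dc x
      by (simp add: assoc_mult_mat_vec[of P n n "D * transpose_mat P" n x] assoc_mult_mat_vec[of D n n "transpose_mat P" n x])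
    hence "x \<bullet> (A *\<^sub>v x) = y \<bullet> (D *\<^sub>v y)" using transpose_vec_mult_scalar[OF P _ x, of "D *\<^sub>v y"] y Dc
      unfolding y_def by simp
    also have "\<dots> = (\<Sum>i<n. y $ i * (ls ! i * y $ i))"
    proof -
      have Dy: "\<And>i. i < n \<Longrightarrow> (D *\<^sub>v y) $ i = ls ! i * y $ i"
      proof -
        fix i assume i: "i < n"
        have "(D *\<^sub>v y) $ i = (\<Sum>j<n. (if i = j then ls ! i else 0) * y $ j)"
          using i y Dc by (simp add: scalar_prod_def D_def lessThan_atLeast0)
        also have "\<dots> = (\<Sum>j<n. if j = i then ls ! i * y $ j else 0)" by (rule sum.cong) auto
        also have "\<dots> = ls ! i * y $ i" using i by (simp add: sum.delta')
        finally show "(D *\<^sub>v y) $ i = ls ! i * y $ i" .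
      qed
      show ?thesis using y Dc Dy by (simp add: scalar_prod_def lessThan_atLeast0)
    qed
    also have "\<dots> = (\<Sum>i<n. (pv i \<bullet> x)\<^sup>2 * ls ! i)"
      by (rule sum.cong) (auto simp: y_def yidx[OF x] power2_eq_square)
    finally show "x \<bullet> (A *\<^sub>v x) = (\<Sum>i<n. (pv i \<bullet> x)\<^sup>2 * ls ! i)" .
  qed
  have pars: "\<And>x. x \<in> carrier_vec n \<Longrightarrow> x \<bullet> x = (\<Sum>i<n. (pv i \<bullet> x)\<^sup>2)"
  proof -
    fix x :: "real vec" assume x: "x \<in> carrier_vec n"
    define y where "y = transpose_mat P *\<^sub>v x"
    have y: "y \<in> carrier_vec n" unfolding y_def using P x by simp
    have "x \<bullet> x = x \<bullet> ((P * transpose_mat P) *\<^sub>v x)" unfolding PPt using x by simp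
    also have "\<dots> = x \<bullet> (P *\<^sub>v y)" unfolding y_def using P x by simp
    also have "\<dots> = y \<bullet> y" using transpose_vec_mult_scalar[OF P y x] unfolding y_def by simp
    also have "\<dots> = (\<Sum>i<n. y $ i * y $ i)" using y by (simp add: scalar_prod_def lessThan_atLeast0)
    also have "\<dots> = (\<Sum>i<n. (pv i \<bullet> x)\<^sup>2)"
      by (rule sum.cong) (auto simp: y_def yidx[OF x] power2_eq_square)
    finally show "x \<bullet> x = (\<Sum>i<n. (pv i \<bullet> x)\<^sup>2)" .
  qed
  have trace: "(\<Sum>j<n. A $$ (j,j)) = (\<Sum>i<n. ls ! i)"
  proof -
    have "(\<Sum>j<n. A $$ (j,j)) = (\<Sum>j<n. \<Sum>i<n. (P $$ (j, i))\<^sup>2 * ls ! i)"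
    proof (rule sum.cong[OF refl])
      fix j assume j: "j \<in> {..<n}"
      have u: "unit_vec n j \<in> carrier_vec n" by simp
      have "A $$ (j,j) = unit_vec n j \<bullet> (A *\<^sub>v unit_vec n j)" using j carr by simp
      also have "\<dots> = (\<Sum>i<n. (pv i \<bullet> unit_vec n j)\<^sup>2 * ls ! i)" by (rule quad[OF u])
      also have "\<dots> = (\<Sum>i<n. (P $$ (j, i))\<^sup>2 * ls ! i)"
        by (rule sum.cong) (use j P in \<open>auto simp: pv_def\<close>)
      finally show "A $$ (j,j) = (\<Sum>i<n. (P $$ (j, i))\<^sup>2 * ls ! i)" .
    qed
    also have "\<dots> = (\<Sum>i<n. ls ! i * (\<Sum>j<n. (P $$ (j, i))\<^sup>2))"
      by (subst sum.swap) (simp add: sum_distrib_left mult.commute)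
    also have "\<dots> = (\<Sum>i<n. ls ! i)"
    proof (rule sum.cong[OF refl])
      fix i assume i: "i \<in> {..<n}"
      have "(\<Sum>j<n. (P $$ (j, i))\<^sup>2) = pv i \<bullet> pv i"
        using i P by (simp add: pv_def scalar_prod_def lessThan_atLeast0 power2_eq_square)
      also have "\<dots> = 1" using pij[of i i] i by simp
      finally show "ls ! i * (\<Sum>j<n. (P $$ (j, i))\<^sup>2) = ls ! i" by simp
    qed
    finally show ?thesis .
  qed
  define o1 where "o1 = vec n (\<lambda>_. 1::real)"
  have o1: "o1 \<in> carrier_vec n" unfolding o1_def by simp
  have oAo: "o1 \<bullet> (A *\<^sub>v o1) = (\<Sum>i<n. \<Sum>j<n. A $$ (i,j))"
    using carr unfolding o1_def by (simp add: scalar_prod_def lessThan_atLeast0)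
  have oo: "o1 \<bullet> o1 = real n" unfolding o1_def by (simp add: scalar_prod_def)
  have offdiag: "(\<Sum>i<n. \<Sum>j<n. if i \<noteq> j then A $$ (i, j) else 0) = (\<Sum>i<n. \<Sum>j<n. A $$ (i,j)) - (\<Sum>j<n. A $$ (j,j))"
  proof -
    have "(\<Sum>i<n. \<Sum>j<n. A $$ (i,j)) = (\<Sum>i<n. (\<Sum>j<n. if i \<noteq> j then A $$ (i, j) else 0) + A $$ (i,i))"
    proof (rule sum.cong[OF refl])
      fix i assume i: "i \<in> {..<n}"
      have "(\<Sum>j<n. A $$ (i,j)) = (\<Sum>j<n. (if i \<noteq> j then A $$ (i, j) else 0) + (if j = i then A $$ (i, j) else 0))"
        by (rule sum.cong) auto
      also have "\<dots> = (\<Sum>j<n. if i \<noteq> j then A $$ (i, j) else 0) + A $$ (i,i)"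
        using i by (simp add: sum.distrib sum.delta')
      finally show "(\<Sum>j<n. A $$ (i,j)) = (\<Sum>j<n. if i \<noteq> j then A $$ (i, j) else 0) + A $$ (i,i)" .
    qed
    then show ?thesis by (simp add: sum.distrib)
  qed
  define mu where "mu = (1 / real n) * (\<Sum>j<n. ls ! j)"
  define V where "V = (1 / real n) * (\<Sum>i<n. (ls ! i - mu)\<^sup>2)"
  define X where "X = ((real n - real k)\<^sup>2 + (real k)\<^sup>2) / real n"
  define s where "s = (real n - real k) / real n"
  define c where "c i = pv i \<bullet> o1" for i
  define w where "w i = (c i)\<^sup>2 / real n" for i
  define \<beta> where "\<beta> i = ls ! i - mu" for i
  define L where "L = (1 / real n) * (\<Sum>i<n. \<Sum>j<n. if i \<noteq> j then A $$ (i, j) else 0)"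
  have nr: "real n > 0" using n0 by simp
  have hyp': "L \<ge> sqrt V * sqrt X" using hyp unfolding L_def V_def X_def mu_def .
  have sV: "sqrt V > 0" using sig_pos unfolding V_def mu_def .
  have csum: "(\<Sum>i<n. (c i)\<^sup>2) = real n" using pars[OF o1] oo unfolding c_def by simp
  have wsum: "(\<Sum>i<n. w i) = 1" unfolding w_def using csum nr by (simp add: sum_divide_distrib[symmetric])
  have wnn: "\<And>i. w i \<ge> 0" unfolding w_def by simp
  have bsum: "(\<Sum>i<n. \<beta> i) = 0" unfolding \<beta>_def mu_def using nr by (simp add: sum_subtractf)
  have Lw: "L = (\<Sum>i<n. w i * \<beta> i)"
  proof -
    have "L = (1 / real n) * ((\<Sum>i<n. (c i)\<^sup>2 * ls ! i) - (\<Sum>i<n. ls ! i))"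
      unfolding L_def offdiag trace oAo[symmetric] quad[OF o1] c_def ..
    also have "\<dots> = (\<Sum>i<n. w i * ls ! i) - mu"
      unfolding w_def mu_def by (simp add: sum_divide_distrib right_diff_distrib mult.commute)
    also have "\<dots> = (\<Sum>i<n. w i * \<beta> i)"
      unfolding \<beta>_def by (simp add: right_diff_distrib sum_subtractf sum_distrib_right[symmetric] wsum)
    finally show ?thesis .
  qed
  have bsq: "(\<Sum>i<n. (\<beta> i)\<^sup>2) = real n * V" unfolding V_def \<beta>_def using nr by simp
  have s1: "s < 1" unfolding s_def using k1 nr by (simp add: field_simps)
  have s2: "s \<ge> 1/2" unfolding s_def using kn nr by (simp add: field_simps)
  have sX: "s\<^sup>2 + (1-s)\<^sup>2 - 1 / real n = (X - 1) / real n"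
    unfolding s_def X_def using nr by (simp add: field_simps power2_eq_square)
  have fin: "finite (set ls)" by simp
  have ne: "set ls \<noteq> {}" using len n0 by auto
  have bmax: "\<And>p i. p < n \<Longrightarrow> ls ! p = M \<Longrightarrow> i < n \<Longrightarrow> \<beta> i \<le> \<beta> p"
    unfolding \<beta>_def M_def using len by (auto intro!: Max_ge)
  have contra: "\<And>p. p < n \<Longrightarrow> ls ! p = M \<Longrightarrow> w p \<le> s \<Longrightarrow> False"
  proof -
    fix p assume p: "p < n" and pM: "ls ! p = M" and wp: "w p \<le> s"
    have "L \<le> sqrt (\<Sum>i<n. (\<beta> i)\<^sup>2) * sqrt (s\<^sup>2 + (1-s)\<^sup>2 - 1/n)"
      unfolding Lw by (rule key_ineq[OF p _ wsum bsum _ wp s1]) (use wnn bmax[OF p pM] in auto)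
    also have "\<dots> = sqrt (real n * V * ((X - 1) / real n))" unfolding bsq sX by (rule real_sqrt_mult[symmetric])
    also have "real n * V * ((X - 1) / real n) = V * (X - 1)" using nr by simp
    also have "sqrt (V * (X - 1)) = sqrt V * sqrt (X - 1)" by (simp add: real_sqrt_mult)
    finally have "sqrt V * sqrt X \<le> sqrt V * sqrt (X - 1)" using hyp' by simp
    hence "sqrt X \<le> sqrt (X - 1)" using sV by simp
    thus False by simp
  qed
  have "M \<in> set ls" unfolding M_def using fin ne by (rule Max_in)
  then obtain p where p: "p < n" and pM: "ls ! p = M" using len by (auto simp: in_set_conv_nth)
  have uniq: "\<And>q. q < n \<Longrightarrow> ls ! q = M \<Longrightarrow> q = p"
  proof (rule ccontr)
    fix q assume q: "q < n" and qM: "ls ! q = M" and qp: "q \<noteq> p"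
    have "w p + w q = (\<Sum>i\<in>{p,q}. w i)" using qp by simp
    also have "\<dots> \<le> (\<Sum>i<n. w i)" by (rule sum_mono2) (use p q wnn in auto)
    finally have "w p + w q \<le> 1" using wsum by simp
    hence "w p \<le> s \<or> w q \<le> s" using s2 by linarith
    thus False using contra[OF p pM] contra[OF q qM] by blast
  qed
  have part1: "order M (char_poly A) = 1"
  proof -
    have ordlin: "\<And>a. order M [:-a, 1:] = (if a = M then 1 else 0)"
    proof -
      fix a :: real
      show "order M [:-a, 1:] = (if a = M then 1 else 0)"
      proof (cases "a = M")
        case True then show ?thesis using order_power_n_n[of M 1] by simp
      next
        case False
        have "poly [:-a, 1:] M \<noteq> 0" using False by simp
        from order_0I[OF this] show ?thesis using False by simp
      qed
    qed
    have "order M (char_poly A) = sum_list (map (order M) (map (\<lambda>a. [:-a, 1:]) ls))"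
      unfolding cpA by (rule order_prod_list) auto
    also have "\<dots> = sum_list (map (\<lambda>a. if a = M then 1 else 0) ls)"
      by (simp add: ordlin comp_def)
    also have "\<dots> = (\<Sum>i<n. if ls ! i = M then 1 else 0)"
      by (simp add: sum_list_sum_nth len lessThan_atLeast0)
    also have "\<dots> = (\<Sum>i<n. if i = p then 1 else 0)"
    proof (rule sum.cong[OF refl])
      fix x assume "x \<in> {..<n}"
      then have "x < n" by simp
      then show "(if ls ! x = M then 1 else 0) = (if x = p then 1 else 0)"
        using uniq[of x] pM by (cases "x = p") auto
    qed
    also have "\<dots> = 1" using p by simp
    finally show ?thesis .
  qed
  define v where "v = pv p"
  have vc: "v \<in> carrier_vec n" unfolding v_def by (rule pvc)
  have vv: "v \<bullet> v = 1" unfolding v_def using pij[OF p p] by simp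
  have vnz: "v \<noteq> 0\<^sub>v n" using vv by auto
  have Av: "A *\<^sub>v v = M \<cdot>\<^sub>v v" unfolding v_def using Apv[OF p] pM by simp
  define v' where "v' = (-1) \<cdot>\<^sub>v v"
  have v'c: "v' \<in> carrier_vec n" unfolding v'_def using vc by simp
  have "v' \<bullet> v' = 1" using vv vc unfolding v'_def by simp
  hence v'nz: "v' \<noteq> 0\<^sub>v n" by auto
  have Av': "A *\<^sub>v v' = M \<cdot>\<^sub>v v'" unfolding v'_def
    using mult_mat_vec[OF carr vc, of "-1"] Av by (simp add: smult_smult_assoc)
  have ev: "eigenvector A v M" unfolding eigenvector_def using carr vc vnz Av by simp
  have ev': "eigenvector A v' M" unfolding eigenvector_def using carr v'c v'nz Av' by simp
  have part2: "\<exists>v. eigenvector A v M \<and> card {i. i < n \<and> v $ i \<ge> 0} \<ge> n - k + 1"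
  proof (rule ccontr)
    assume neg: "\<not> ?thesis"
    have nb: "\<And>x. eigenvector A x M \<Longrightarrow> card {i. i < n \<and> x $ i \<ge> 0} \<le> n - k"
    proof -
      fix x assume "eigenvector A x M"
      with neg have "\<not> (n - k + 1 \<le> card {i. i < n \<and> x $ i \<ge> 0})" by blast
      thus "card {i. i < n \<and> x $ i \<ge> 0} \<le> n - k" by simp
    qed
    have "{i\<in>{..<n}. v $ i \<ge> 0} = {i. i < n \<and> v $ i \<ge> 0}" by auto
    hence c1: "card {i\<in>{..<n}. v $ i \<ge> 0} \<le> n - k" using nb[OF ev] by simp
    have "{i\<in>{..<n}. - (v $ i) \<ge> 0} = {i. i < n \<and> v' $ i \<ge> 0}"
    proof (rule Collect_cong)
      fix i show "(i \<in> {..<n} \<and> - (v $ i) \<ge> 0) = (i < n \<and> v' $ i \<ge> 0)"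
        unfolding v'_def using vc by (cases "i < n") auto
    qed
    hence c2: "card {i\<in>{..<n}. - (v $ i) \<ge> 0} \<le> n - k" using nb[OF ev'] by simp
    have "(\<Sum>i\<in>{..<n}. v $ i)\<^sup>2 \<le> real (n - k) * (\<Sum>i\<in>{..<n}. (v $ i)\<^sup>2)"
      by (rule sign_bound[OF _ c1 c2]) simp
    also have "(\<Sum>i\<in>{..<n}. (v $ i)\<^sup>2) = 1" using vv vc
      by (simp add: scalar_prod_def lessThan_atLeast0 power2_eq_square)
    finally have b: "(\<Sum>i<n. v $ i)\<^sup>2 \<le> real n - real k" using kn' by (simp add: of_nat_diff)
    have "c p = (\<Sum>i<n. v $ i)" unfolding c_def v_def[symmetric] o1_def using vc
      by (simp add: scalar_prod_def lessThan_atLeast0)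
    hence "w p \<le> s" unfolding w_def s_def using b nr by (simp add: divide_right_mono)
    thus False using contra[OF p pM] by blast
  qed
  show ?thesis using part1 part2 unfolding M_def by blast
qed

end
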